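(* Let $s=a_1a_2\cdots a_n$ be a permutation of $[n]$ in one-line form, and let $\bar s=(0,a_1,a_2,\ldots,a_n)$ and $p_t=(n,n-1,\ldots,1,0)$, both $(n+1)$-cycles on $[n]^*=\{0,1,\ldots,n\}$. Then $$td(s)\ \ge\ \max_{\gamma}\ \frac{\max\{|C(p_t\bar s\gamma)-C(\gamma)|,\ |C_{odd}(p_t\bar s\gamma)-C_{odd}(\gamma)|,\ |C_{ev}(p_t\bar s\gamma)-C_{ev}(\gamma)|\}}{2},$$ where $\gamma$ ranges over all permutations of $[n]^*$.
   Context: Permutations are multiplied as composition of maps, $(\sigma\tau)(x)=\sigma(\tau(x))$. For a permutation $\pi$, $C(\pi)$, $C_{odd}(\pi)$ and $C_{ev}(\pi)$ denote the number of cycles, of odd-length cycles and of even-length cycles of $\pi$ (fixed points counted as cycles of length $1$). A transposition acting on a sequence $a_1\cdots a_n$ replaces it by $a_1\cdots a_{i-1}a_{j+1}\cdots a_k a_i\cdots a_j a_{k+1}\cdots a_n$ for some $1\le i\le j<k\le n$ (interchanging two adjacent blocks). The transposition distance $td(s)$ is the minimum number of transpositions needed to transform $s$ into $e_n=12\cdots n$. *)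

theory Defs
  imports "HOL-Combinatorics.Combinatorics"
begin

definition perm_cycles :: "('a \<Rightarrow> 'a) \<Rightarrow> 'a set \<Rightarrow> 'a set set" where
  "perm_cycles p A = (\<lambda>x. orbit p x) ` A"

definition num_cycles :: "('a \<Rightarrow> 'a) \<Rightarrow> 'a set \<Rightarrow> nat" where
  "num_cycles p A = card (perm_cycles p A)"

definition num_odd_cycles :: "('a \<Rightarrow> 'a) \<Rightarrow> 'a set \<Rightarrow> nat" where
  "num_odd_cycles p A = card {c \<in> perm_cycles p A. odd (card c)}"

definition num_even_cycles :: "('a \<Rightarrow> 'a) \<Rightarrow> 'a set \<Rightarrow> nat" where
  "num_even_cycles p A = card {c \<in> perm_cycles p A. even (card c)}"

text \<open>A transposition (block interchange) on a sequence a_1 ... a_n, with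
  1 \<le> i \<le> j < k \<le> n: result a_1..a_{i-1} a_{j+1}..a_k a_i..a_j a_{k+1}..a_n.\<close>
definition block_transp :: "nat \<Rightarrow> nat \<Rightarrow> nat \<Rightarrow> 'a list \<Rightarrow> 'a list" where
  "block_transp i j k s =
     take (i - 1) s @ drop j (take k s) @ drop (i - 1) (take j s) @ drop k s"

definition transp_step :: "'a list \<Rightarrow> 'a list \<Rightarrow> bool" where
  "transp_step s t \<longleftrightarrow>
     (\<exists>i j k. 1 \<le> i \<and> i \<le> j \<and> j < k \<and> k \<le> length s \<and> t = block_transp i j k s)"

definition td :: "nat list \<Rightarrow> nat" where
  "td s = (LEAST m. (transp_step ^^ m) s [1..<length s + 1])"

end

theory Submission
  imports Defs
begin

lemma cyc_succ:
  assumes "distinct (xs @ a # ys)"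
  shows "cycle_of_list (xs @ a # ys) a = hd (ys @ xs @ [a])"
proof -
  let ?L = "xs @ a # ys"
  let ?f = "cycle_of_list ?L"
  have "map ?f ?L = rotate1 ?L"
    using cyclic_rotation[OF assms, of 1] by simp
  then have m: "map ?f ?L ! length xs = rotate1 ?L ! length xs"
    by simp
  have n: "(map ?f xs @ ?f a # map ?f ys) ! length (map ?f xs) = ?f a"
    by (rule nth_append_length)
  have "?f a = rotate1 ?L ! length xs" using m n by simp
  moreover have "rotate1 ?L ! length xs = hd (ys @ xs @ [a])"
    by (cases xs) (auto simp: nth_append hd_append hd_conv_nth)
  ultimately show ?thesis by simp
qed

lemma cyc_eq_at:
  assumes "distinct L" "L = xs @ a # ys"
  shows "cycle_of_list L a = hd (ys @ xs @ [a])"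
  using assms cyc_succ[of xs a ys] by simp

lemma block_cyc:
  assumes d: "distinct (Q @ B1 @ B2 @ R)" and ne: "Q \<noteq> []" "B1 \<noteq> []" "B2 \<noteq> []"
  shows "e \<notin> {last Q, last B1, last B2} \<Longrightarrow>
           cycle_of_list (Q @ B2 @ B1 @ R) e = cycle_of_list (Q @ B1 @ B2 @ R) e"
    and "cycle_of_list (Q @ B2 @ B1 @ R) (last Q) = cycle_of_list (Q @ B1 @ B2 @ R) (last B1)"
    and "cycle_of_list (Q @ B2 @ B1 @ R) (last B1) = cycle_of_list (Q @ B1 @ B2 @ R) (last B2)"
    and "cycle_of_list (Q @ B2 @ B1 @ R) (last B2) = cycle_of_list (Q @ B1 @ B2 @ R) (last Q)"
proof -
  define L where "L = Q @ B1 @ B2 @ R"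
  define L' where "L' = Q @ B2 @ B1 @ R"
  have dL: "distinct L" using d L_def by simp
  have dL': "distinct L'" using d unfolding L'_def by auto
  have sL: "set L' = set L" unfolding L_def L'_def by auto
  obtain Q0 x where Q: "Q = Q0 @ [x]" using ne(1) by (metis append_butlast_last_id)
  obtain B10 y where B1: "B1 = B10 @ [y]" using ne(2) by (metis append_butlast_last_id)
  obtain B20 z where B2: "B2 = B20 @ [z]" using ne(3) by (metis append_butlast_last_id)
  have lx: "last Q = x" "last B1 = y" "last B2 = z" using Q B1 B2 by simp_all
  have hQ: "hd (R @ Q @ W) = hd (R @ Q)" for W using ne(1) by (cases R) auto
  show "cycle_of_list L' (last Q) = cycle_of_list L (last B1)"
  proof -
    have "cycle_of_list L' x = hd (B2 @ B1 @ R @ Q0 @ [x])"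
      using cyc_eq_at[OF dL', of Q0 x "B2 @ B1 @ R"] unfolding L'_def Q by simp
    moreover have "cycle_of_list L y = hd (B2 @ R @ (Q @ B10) @ [y])"
      using cyc_eq_at[OF dL, of "Q @ B10" y "B2 @ R"] unfolding L_def B1 by simp
    ultimately show ?thesis using lx ne by (simp add: hd_append)
  qed
  show "cycle_of_list L' (last B1) = cycle_of_list L (last B2)"
  proof -
    have "cycle_of_list L' y = hd (R @ (Q @ B2 @ B10) @ [y])"
      using cyc_eq_at[OF dL', of "Q @ B2 @ B10" y "R"] unfolding L'_def B1 by simp
    moreover have "cycle_of_list L z = hd (R @ (Q @ B1 @ B20) @ [z])"
      using cyc_eq_at[OF dL, of "Q @ B1 @ B20" z "R"] unfolding L_def B2 by simp
    ultimately show ?thesis using lx hQ by simp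
  qed
  show "cycle_of_list L' (last B2) = cycle_of_list L (last Q)"
  proof -
    have "cycle_of_list L' z = hd (B1 @ R @ (Q @ B20) @ [z])"
      using cyc_eq_at[OF dL', of "Q @ B20" z "B1 @ R"] unfolding L'_def B2 by simp
    moreover have "cycle_of_list L x = hd (B1 @ B2 @ R @ Q0 @ [x])"
      using cyc_eq_at[OF dL, of Q0 x "B1 @ B2 @ R"] unfolding L_def Q by simp
    ultimately show ?thesis using lx ne by (simp add: hd_append)
  qed
  assume e: "e \<notin> {last Q, last B1, last B2}"
  show "cycle_of_list L' e = cycle_of_list L e"
  proof (cases "e \<in> set L")
    case False
    then show ?thesis using sL by (simp add: id_outside_supp)
  next
    case True
    then consider "e \<in> set Q" | "e \<in> set B1" | "e \<in> set B2" | "e \<in> set R"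
      unfolding L_def by auto
    then show ?thesis
    proof cases
      case 1
      then obtain q1 q2 where q: "Q = q1 @ e # q2" by (metis split_list)
      have "q2 \<noteq> []" using q e by auto
      have "cycle_of_list L' e = hd ((q2 @ B2 @ B1 @ R) @ q1 @ [e])"
        using cyc_eq_at[OF dL', of q1 e "q2 @ B2 @ B1 @ R"] unfolding L'_def q by simp
      moreover have "cycle_of_list L e = hd ((q2 @ B1 @ B2 @ R) @ q1 @ [e])"
        using cyc_eq_at[OF dL, of q1 e "q2 @ B1 @ B2 @ R"] unfolding L_def q by simp
      ultimately show ?thesis using \<open>q2 \<noteq> []\<close> by simp
    next
      case 2
      then obtain q1 q2 where q: "B1 = q1 @ e # q2" by (metis split_list)
      have "q2 \<noteq> []" using q e by auto
      have "cycle_of_list L' e = hd ((q2 @ R) @ (Q @ B2 @ q1) @ [e])"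
        using cyc_eq_at[OF dL', of "Q @ B2 @ q1" e "q2 @ R"] unfolding L'_def q by simp
      moreover have "cycle_of_list L e = hd ((q2 @ B2 @ R) @ (Q @ q1) @ [e])"
        using cyc_eq_at[OF dL, of "Q @ q1" e "q2 @ B2 @ R"] unfolding L_def q by simp
      ultimately show ?thesis using \<open>q2 \<noteq> []\<close> by simp
    next
      case 3
      then obtain q1 q2 where q: "B2 = q1 @ e # q2" by (metis split_list)
      have "q2 \<noteq> []" using q e by auto
      have "cycle_of_list L' e = hd ((q2 @ B1 @ R) @ (Q @ q1) @ [e])"
        using cyc_eq_at[OF dL', of "Q @ q1" e "q2 @ B1 @ R"] unfolding L'_def q by simp
      moreover have "cycle_of_list L e = hd ((q2 @ R) @ (Q @ B1 @ q1) @ [e])"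
        using cyc_eq_at[OF dL, of "Q @ B1 @ q1" e "q2 @ R"] unfolding L_def q by simp
      ultimately show ?thesis using \<open>q2 \<noteq> []\<close> by simp
    next
      case 4
      then obtain q1 q2 where q: "R = q1 @ e # q2" by (metis split_list)
      have "cycle_of_list L' e = hd (q2 @ (Q @ B2 @ B1 @ q1) @ [e])"
        using cyc_eq_at[OF dL', of "Q @ B2 @ B1 @ q1" e "q2"] unfolding L'_def q by simp
      moreover have "cycle_of_list L e = hd (q2 @ (Q @ B1 @ B2 @ q1) @ [e])"
        using cyc_eq_at[OF dL, of "Q @ B1 @ B2 @ q1" e "q2"] unfolding L_def q by simp
      moreover have "hd (q2 @ (Q @ W)) = hd (q2 @ Q)" for W using ne(1) by (cases q2) auto
      ultimately show ?thesis by (metis append.assoc)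
    qed
  qed
qed

lemma orbit_same:
  assumes "permutation f" "y \<in> orbit f x"
  shows "orbit f y = orbit f x"
  by (rule orbit_cyclic_eq3[OF cyclic_on_orbit'[OF assms(1)] assms(2)])

lemma orbit_agree:
  assumes "permutation f" "\<forall>e. e \<notin> D \<longrightarrow> g e = f e" "orbit f x \<inter> D = {}"
  shows "orbit g x = orbit f x"
proof
  have "x \<in> orbit f x" by (rule permutation_self_in_orbit[OF assms(1)])
  then have xD: "x \<notin> D" using assms(3) by blast
  then have gx: "g x = f x" using assms(2) by simp
  show "orbit g x \<subseteq> orbit f x"
  proof
    fix y assume "y \<in> orbit g x"
    then show "y \<in> orbit f x"
    proof induct
      case base then show ?case using gx orbit.base[of f x] by simp
    next
      case (step y)
      then have "y \<notin> D" using assms(3) by blast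
      then have "g y = f y" using assms(2) by simp
      then show ?case using step(2) orbit.step[of y f x] by simp
    qed
  qed
  show "orbit f x \<subseteq> orbit g x"
  proof
    fix y assume "y \<in> orbit f x"
    then show "y \<in> orbit g x"
    proof induct
      case base then show ?case using gx orbit.base[of g x] by simp
    next
      case (step y)
      then have "y \<notin> D" using assms(3) by blast
      then have "g y = f y" using assms(2) by simp
      then show ?case using step(2) orbit.step[of y g x] by simp
    qed
  qed
qed

lemma orbit_into:
  assumes "g a = f b" "\<forall>y\<in>orbit f b. y \<noteq> b \<longrightarrow> g y = f y"
  shows "orbit f b \<subseteq> orbit g a"
proof
  fix y assume "y \<in> orbit f b"
  then show "y \<in> orbit g a"
  proof induct
    case base then show ?case using assms(1) orbit.base[of g a] by simp
  next
    case (step y)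
    show ?case
    proof (cases "y = b")
      case True then show ?thesis using assms(1) orbit.base[of g a] by simp
    next
      case False then have "g y = f y" using step(1) assms(2) by blast
      then show ?thesis using step(2) orbit.step[of y g a] by simp
    qed
  qed
qed

lemma merge:
  assumes pf: "permutation f" and pg: "permutation g"
    and dist: "orbit f u \<noteq> orbit f v" "orbit f v \<noteq> orbit f w" "orbit f u \<noteq> orbit f w"
    and agree: "\<forall>e. e \<notin> {u,v,w} \<longrightarrow> g e = f e"
    and rot: "g u = f v" "g v = f w" "g w = f u"
  shows "orbit g v = orbit g u" "orbit g w = orbit g u"
    "orbit g u = orbit f u \<union> orbit f v \<union> orbit f w"
proof -
  have s: "a \<in> orbit f a" for a by (rule permutation_self_in_orbit[OF pf])
  have ne: "a \<in> orbit f b \<Longrightarrow> orbit f a = orbit f b" for a b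
    by (rule orbit_same[OF pf])
  have 1: "orbit f v \<subseteq> orbit g u"
  proof (rule orbit_into[of g u f v, OF rot(1)], intro ballI impI)
    fix y assume y: "y \<in> orbit f v" "y \<noteq> v"
    have "y \<noteq> u" using y(1) ne[of u v] dist by auto
    moreover have "y \<noteq> w" using y(1) ne[of w v] dist by auto
    ultimately show "g y = f y" using agree y(2) by simp
  qed
  have 2: "orbit f w \<subseteq> orbit g v"
  proof (rule orbit_into[of g v f w, OF rot(2)], intro ballI impI)
    fix y assume y: "y \<in> orbit f w" "y \<noteq> w"
    have "y \<noteq> u" using y(1) ne[of u w] dist by auto
    moreover have "y \<noteq> v" using y(1) ne[of v w] dist by auto
    ultimately show "g y = f y" using agree y(2) by simp
  qed
  have 3: "orbit f u \<subseteq> orbit g w"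
  proof (rule orbit_into[of g w f u, OF rot(3)], intro ballI impI)
    fix y assume y: "y \<in> orbit f u" "y \<noteq> u"
    have "y \<noteq> v" using y(1) ne[of v u] dist by auto
    moreover have "y \<noteq> w" using y(1) ne[of w u] dist by auto
    ultimately show "g y = f y" using agree y(2) by simp
  qed
  have "v \<in> orbit g u" using 1 s[of v] by blast
  then show e1: "orbit g v = orbit g u" by (rule orbit_same[OF pg])
  have "w \<in> orbit g u" using 2 s[of w] e1 by blast
  then show e2: "orbit g w = orbit g u" by (rule orbit_same[OF pg])
  have "orbit g u \<subseteq> orbit f u \<union> orbit f v \<union> orbit f w"
  proof
    fix y assume "y \<in> orbit g u"
    then show "y \<in> orbit f u \<union> orbit f v \<union> orbit f w"
    proof induct
      case base then show ?case using rot(1) orbit.base[of f v] by simp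
    next
      case (step y)
      show ?case
      proof (cases "y \<in> {u,v,w}")
        case True then show ?thesis using rot orbit.base[of f u] orbit.base[of f v] orbit.base[of f w]
          by auto
      next
        case False then have "g y = f y" using agree by blast
        then show ?thesis using step(2) orbit.step[of y f u] orbit.step[of y f v] orbit.step[of y f w]
          by auto
      qed
    qed
  qed
  then show "orbit g u = orbit f u \<union> orbit f v \<union> orbit f w"
    using 1 2 3 e1 e2 by blast
qed

lemma card3_distinct:
  assumes "card {a, b, c} = 3"
  shows "a \<noteq> b" "b \<noteq> c" "a \<noteq> c"
  using assms by (auto simp: card_insert_if split: if_splits)

lemma card3_le: "card {a, b, c} \<le> 3"
  by (auto simp: card_insert_if)

lemma one_dir:
  assumes pf: "permutation f" and pg: "permutation g"
    and D: "D = {u,v,w}"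
    and agree: "\<forall>e. e \<notin> D \<longrightarrow> g e = f e"
    and rot: "g u = f v" "g v = f w" "g w = f u"
    and Pcl: "\<And>X Y Z. finite X \<Longrightarrow> finite Y \<Longrightarrow> finite Z \<Longrightarrow> X \<inter> Y = {} \<Longrightarrow> Y \<inter> Z = {}
               \<Longrightarrow> X \<inter> Z = {} \<Longrightarrow> P X \<Longrightarrow> P Y \<Longrightarrow> P Z \<Longrightarrow> P (X \<union> Y \<union> Z)"
    and k3: "card {Cy \<in> orbit f ` D. P Cy} = 3"
  shows "card {Cy \<in> orbit g ` D. P Cy} \<ge> 1"
proof -
  have S: "orbit f ` D = {orbit f u, orbit f v, orbit f w}" using D by auto
  have fS: "finite (orbit f ` D)" using D by simp
  have le: "card {Cy \<in> orbit f ` D. P Cy} \<le> card (orbit f ` D)"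
    by (rule card_mono[OF fS]) auto
  have c3: "card (orbit f ` D) = 3" using le k3 S card3_le[of "orbit f u" "orbit f v" "orbit f w"]
    by simp
  have eq: "{Cy \<in> orbit f ` D. P Cy} = orbit f ` D"
    by (rule card_subset_eq[OF fS]) (use c3 k3 in auto)
  have PP: "P (orbit f u)" "P (orbit f v)" "P (orbit f w)" using eq D by auto
  have d: "orbit f u \<noteq> orbit f v" "orbit f v \<noteq> orbit f w" "orbit f u \<noteq> orbit f w"
    using card3_distinct[of "orbit f u" "orbit f v" "orbit f w"] c3 unfolding S by simp_all
  have ag: "\<forall>e. e \<notin> {u,v,w} \<longrightarrow> g e = f e" using agree D by simp
  note m = merge[OF pf pg d ag rot]
  have s: "a \<in> orbit f a" for a by (rule permutation_self_in_orbit[OF pf])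
  have fin: "finite (orbit f a)" for a by (rule finite_orbit[OF s])
  have disj: "orbit f a \<noteq> orbit f b \<Longrightarrow> orbit f a \<inter> orbit f b = {}" for a b
  proof -
    assume ne: "orbit f a \<noteq> orbit f b"
    { fix y assume y: "y \<in> orbit f a" "y \<in> orbit f b"
      have "orbit f a = orbit f b"
        using orbit_same[OF pf y(1)] orbit_same[OF pf y(2)] by simp
      then have False using ne by simp }
    then show ?thesis by blast
  qed
  have "P (orbit g u)" unfolding m(3)
    by (rule Pcl[OF fin fin fin disj[OF d(1)] disj[OF d(2)] disj[OF d(3)] PP])
  moreover have "orbit g ` D = {orbit g u}" using D m by auto
  ultimately have "{Cy \<in> orbit g ` D. P Cy} = {orbit g u}" by auto
  then show ?thesis by simp
qed

lemma decomp:
  assumes ph: "permutation h" and DA: "D \<subseteq> A"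
  shows "{Cy \<in> orbit h ` A. P Cy} = {Cy \<in> orbit h ` A. Cy \<inter> D = {} \<and> P Cy} \<union> {Cy \<in> orbit h ` D. P Cy}"
    "{Cy \<in> orbit h ` A. Cy \<inter> D = {} \<and> P Cy} \<inter> {Cy \<in> orbit h ` D. P Cy} = {}"
proof -
  have s: "a \<in> orbit h a" for a by (rule permutation_self_in_orbit[OF ph])
  show "{Cy \<in> orbit h ` A. P Cy} = {Cy \<in> orbit h ` A. Cy \<inter> D = {} \<and> P Cy} \<union> {Cy \<in> orbit h ` D. P Cy}"
  proof (intro set_eqI iffI)
    fix Cy assume "Cy \<in> {Cy \<in> orbit h ` A. P Cy}"
    then obtain x where x: "x \<in> A" "Cy = orbit h x" "P Cy" by auto
    show "Cy \<in> {Cy \<in> orbit h ` A. Cy \<inter> D = {} \<and> P Cy} \<union> {Cy \<in> orbit h ` D. P Cy}"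
    proof (cases "Cy \<inter> D = {}")
      case True then show ?thesis using x by auto
    next
      case False
      then obtain d where dd: "d \<in> D" "d \<in> orbit h x" using x by auto
      have "orbit h d = Cy" using orbit_same[OF ph dd(2)] x(2) by simp
      then show ?thesis using \<open>d \<in> D\<close> x by auto
    qed
  next
    fix Cy assume "Cy \<in> {Cy \<in> orbit h ` A. Cy \<inter> D = {} \<and> P Cy} \<union> {Cy \<in> orbit h ` D. P Cy}"
    then show "Cy \<in> {Cy \<in> orbit h ` A. P Cy}" using DA by auto
  qed
  show "{Cy \<in> orbit h ` A. Cy \<inter> D = {} \<and> P Cy} \<inter> {Cy \<in> orbit h ` D. P Cy} = {}"
    using s by auto
qed

lemma count_change:
  assumes fin: "finite A" and fA: "f permutes A" and gA: "g permutes A"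
    and DA: "{u,v,w} \<subseteq> A"
    and agree: "\<forall>e. e \<notin> {u,v,w} \<longrightarrow> g e = f e"
    and rot: "g u = f v" "g v = f w" "g w = f u"
    and Pcl: "\<And>X Y Z. finite X \<Longrightarrow> finite Y \<Longrightarrow> finite Z \<Longrightarrow> X \<inter> Y = {} \<Longrightarrow> Y \<inter> Z = {}
               \<Longrightarrow> X \<inter> Z = {} \<Longrightarrow> P X \<Longrightarrow> P Y \<Longrightarrow> P Z \<Longrightarrow> P (X \<union> Y \<union> Z)"
  shows "\<bar>int (card {Cy \<in> orbit g ` A. P Cy}) - int (card {Cy \<in> orbit f ` A. P Cy})\<bar> \<le> 2"
proof -
  define D where "D = {u,v,w}"
  have pf: "permutation f" using fA fin permutation_permutes by blast
  have pg: "permutation g" using gA fin permutation_permutes by blast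
  have DA': "D \<subseteq> A" using DA D_def by simp
  have T: "{Cy \<in> orbit f ` A. Cy \<inter> D = {} \<and> P Cy} = {Cy \<in> orbit g ` A. Cy \<inter> D = {} \<and> P Cy}"
  proof -
    have ag1: "\<forall>e. e \<notin> D \<longrightarrow> g e = f e" using agree D_def by simp
    have ag2: "\<forall>e. e \<notin> D \<longrightarrow> f e = g e" using agree D_def by simp
    show ?thesis
    proof (intro set_eqI iffI)
      fix Cy assume "Cy \<in> {Cy \<in> orbit f ` A. Cy \<inter> D = {} \<and> P Cy}"
      then obtain x where x: "x \<in> A" "Cy = orbit f x" "Cy \<inter> D = {}" "P Cy" by auto
      have "orbit g x = Cy" using orbit_agree[OF pf ag1, of x] x(2,3) by simp
      then show "Cy \<in> {Cy \<in> orbit g ` A. Cy \<inter> D = {} \<and> P Cy}" using x by auto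
    next
      fix Cy assume "Cy \<in> {Cy \<in> orbit g ` A. Cy \<inter> D = {} \<and> P Cy}"
      then obtain x where x: "x \<in> A" "Cy = orbit g x" "Cy \<inter> D = {}" "P Cy" by auto
      have "orbit f x = Cy" using orbit_agree[OF pg ag2, of x] x(2,3) by simp
      then show "Cy \<in> {Cy \<in> orbit f ` A. Cy \<inter> D = {} \<and> P Cy}" using x by auto
    qed
  qed
  have cnt: "card {Cy \<in> orbit h ` A. P Cy} = card {Cy \<in> orbit h ` A. Cy \<inter> D = {} \<and> P Cy} + card {Cy \<in> orbit h ` D. P Cy}"
    if ph: "permutation h" for h
  proof -
    have "card {Cy \<in> orbit h ` A. P Cy} = card ({Cy \<in> orbit h ` A. Cy \<inter> D = {} \<and> P Cy} \<union> {Cy \<in> orbit h ` D. P Cy})"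
      using decomp(1)[OF ph DA', where P=P] by simp
    also have "\<dots> = card {Cy \<in> orbit h ` A. Cy \<inter> D = {} \<and> P Cy} + card {Cy \<in> orbit h ` D. P Cy}"
    proof (rule card_Un_disjoint)
      have "finite (orbit h ` A)" using fin by simp
      then show "finite {Cy \<in> orbit h ` A. Cy \<inter> D = {} \<and> P Cy}" by simp
      have "finite (orbit h ` D)" using fin DA' finite_subset by blast
      then show "finite {Cy \<in> orbit h ` D. P Cy}" by simp
      show "{Cy \<in> orbit h ` A. Cy \<inter> D = {} \<and> P Cy} \<inter> {Cy \<in> orbit h ` D. P Cy} = {}"
        by (rule decomp(2)[OF ph DA'])
    qed
    finally show ?thesis .
  qed
  have kle: "card {Cy \<in> orbit h ` D. P Cy} \<le> 3" for h
  proof -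
    have fD: "finite D" unfolding D_def by simp
    have "card {Cy \<in> orbit h ` D. P Cy} \<le> card (orbit h ` D)" by (rule card_mono) (use fD in auto)
    also have "\<dots> \<le> card D" by (rule card_image_le[OF fD])
    also have "\<dots> \<le> 3" unfolding D_def by (rule card3_le)
    finally show ?thesis .
  qed
  have ag1: "\<forall>e. e \<notin> D \<longrightarrow> g e = f e" using agree unfolding D_def by blast
  have ag2: "\<forall>e. e \<notin> D \<longrightarrow> f e = g e" using agree unfolding D_def by auto
  have D': "D = {u,w,v}" unfolding D_def by auto
  have rot': "f u = g w" "f w = g v" "f v = g u" using rot by simp_all
  have o1: "card {Cy \<in> orbit f ` D. P Cy} = 3 \<Longrightarrow> card {Cy \<in> orbit g ` D. P Cy} \<ge> 1"
    by (rule one_dir[where f=f and g=g and D=D and u=u and v=v and w=w and P=P, OF pf pg D_def ag1 rot Pcl])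
  have o2: "card {Cy \<in> orbit g ` D. P Cy} = 3 \<Longrightarrow> card {Cy \<in> orbit f ` D. P Cy} \<ge> 1"
    by (rule one_dir[where f=g and g=f and D=D and u=u and v=w and w=v and P=P, OF pg pf D' ag2 rot' Pcl])
  define a where "a = card {Cy \<in> orbit f ` D. P Cy}"
  define b where "b = card {Cy \<in> orbit g ` D. P Cy}"
  define c where "c = card {Cy \<in> orbit g ` A. Cy \<inter> D = {} \<and> P Cy}"
  have F: "card {Cy \<in> orbit f ` A. P Cy} = c + a" using cnt[OF pf] T a_def c_def by simp
  have G: "card {Cy \<in> orbit g ` A. P Cy} = c + b" using cnt[OF pg] b_def c_def by simp
  have h: "a \<le> 3" "b \<le> 3" "a = 3 \<Longrightarrow> b \<ge> 1" "b = 3 \<Longrightarrow> a \<ge> 1"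
    using kle[of f] kle[of g] o1 o2 a_def b_def by simp_all
  show ?thesis unfolding F G
    by (cases "a = 3"; cases "b = 3") (use h in \<open>auto split: abs_split\<close>)
qed

lemma transp_step_Cons:
  assumes "transp_step s t" shows "transp_step (a # s) (a # t)"
proof -
  obtain i j k where h: "1 \<le> i" "i \<le> j" "j < k" "k \<le> length s" "t = block_transp i j k s"
    using assms unfolding transp_step_def by blast
  obtain i0 where i0: "i = Suc i0" using h(1) by (cases i) auto
  obtain j0 where j0: "j = Suc j0" using h(1,2) by (cases j) auto
  obtain k0 where k0: "k = Suc k0" using h(3) by (cases k) auto
  have "block_transp (i+1) (j+1) (k+1) (a # s) = a # block_transp i j k s"
    unfolding block_transp_def i0 j0 k0 by simp
  moreover have "1 \<le> i+1" "i+1 \<le> j+1" "j+1 < k+1" "k+1 \<le> length (a # s)" using h by auto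
  ultimately show ?thesis unfolding transp_step_def using h(5) by metis
qed

lemma relpow_Cons:
  "(transp_step ^^ m) s t \<Longrightarrow> (transp_step ^^ m) (a # s) (a # t)"
proof (induction m arbitrary: s)
  case 0 then show ?case by simp
next
  case (Suc m)
  then obtain y where "transp_step s y" "(transp_step ^^ m) y t" using relpowp_Suc_D2 by metis
  then show ?case using Suc.IH transp_step_Cons relpowp_Suc_I2 by metis
qed

lemma move_front:
  assumes "P \<noteq> []"
  shows "transp_step (P @ a # R) (a # P @ R)"
proof -
  have "block_transp 1 (length P) (length P + 1) (P @ a # R) = a # P @ R"
    unfolding block_transp_def by simp
  moreover have "1 \<le> (1::nat)" "1 \<le> length P" "length P < length P + 1"
     "length P + 1 \<le> length (P @ a # R)"
    using assms by (auto simp: Suc_le_eq)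
  ultimately show ?thesis unfolding transp_step_def by metis
qed

lemma reach:
  "distinct s \<Longrightarrow> set s = {a..<b} \<Longrightarrow> \<exists>m. (transp_step ^^ m) s [a..<b]"
proof (induction "b - a" arbitrary: s a)
  case 0
  then have "s = []" by auto
  then show ?case using 0 by (intro exI[of _ 0]) simp
next
  case (Suc d)
  then have ab: "a < b" by simp
  then have "a \<in> set s" using Suc.prems by simp
  then obtain P R where s: "s = P @ a # R" by (metis split_list)
  have d2: "distinct (P @ R)" using Suc.prems s by simp
  have "set (P @ R) = set s - {a}" using Suc.prems(1) s by auto
  also have "\<dots> = {a..<b} - {a}" using Suc.prems(2) by simp
  also have "\<dots> = {Suc a..<b}" by auto
  finally have "set (P @ R) = {Suc a..<b}" .
  moreover have "d = b - Suc a" using Suc.hyps by simp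
  ultimately obtain m where m: "(transp_step ^^ m) (P @ R) [Suc a..<b]"
    using Suc.hyps(1) d2 by blast
  then have m': "(transp_step ^^ m) (a # P @ R) [a..<b]"
    using relpow_Cons upt_conv_Cons[OF ab] by metis
  show ?case
  proof (cases "P = []")
    case True then show ?thesis using m' s by auto
  next
    case False
    then have "transp_step s (a # P @ R)" using s move_front by metis
    then show ?thesis using m' relpowp_Suc_I2 by metis
  qed
qed

lemma cyc_rev_inv:
  assumes d: "distinct L"
  shows "cycle_of_list (rev L) (cycle_of_list L e) = e"
proof (cases "e \<in> set L")
  case False then show ?thesis by (simp add: id_outside_supp)
next
  case True
  then obtain xs ys where L: "L = xs @ e # ys" by (metis split_list)
  have dr: "distinct (rev L)" using d by simp
  show ?thesis
  proof (cases ys)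
    case (Cons c ys')
    have "cycle_of_list L e = c" using cyc_succ[of xs e ys] d L Cons by simp
    moreover have "rev L = rev ys' @ c # (e # rev xs)" using L Cons by simp
    ultimately show ?thesis using cyc_succ[of "rev ys'" c "e # rev xs"] dr by simp
  next
    case Nil
    show ?thesis
    proof (cases xs)
      case Nil2: Nil
      then show ?thesis using L Nil by simp
    next
      case (Cons c xs')
      have "cycle_of_list L e = c" using cyc_succ[of xs e ys] d L Cons Nil by simp
      moreover have "rev L = (e # rev xs') @ c # []" using L Cons Nil by simp
      ultimately show ?thesis using cyc_succ[of "e # rev xs'" c "[]"] dr by simp
    qed
  qed
qed

lemma bt_split:
  assumes "1 \<le> i" "i \<le> j" "j < k" "k \<le> length s"
  shows "s = take (i-1) s @ drop (i-1) (take j s) @ drop j (take k s) @ drop k s"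
    "drop (i-1) (take j s) \<noteq> []" "drop j (take k s) \<noteq> []"
proof -
  have 1: "take (i-1) s @ drop (i-1) (take j s) = take j s"
  proof -
    have "min (i-1) j = i-1" using assms by simp
    then have "take (i-1) s = take (i-1) (take j s)" by (simp add: take_take)
    then show ?thesis by (metis append_take_drop_id)
  qed
  have 2: "take j s @ drop j (take k s) = take k s"
  proof -
    have "min j k = j" using assms by simp
    then have "take j s = take j (take k s)" by (simp add: take_take)
    then show ?thesis by (metis append_take_drop_id)
  qed
  show "s = take (i-1) s @ drop (i-1) (take j s) @ drop j (take k s) @ drop k s"
    using 1 2 by (metis append.assoc append_take_drop_id)
  show "drop (i-1) (take j s) \<noteq> []" using assms by auto
  show "drop j (take k s) \<noteq> []" using assms by auto
qed

lemma step_inv: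
  assumes "length s = n" "distinct s" "set s = {1..n}" "transp_step s t"
  shows "length t = n" "distinct t" "set t = {1..n}"
proof -
  obtain i j k where h: "1 \<le> i" "i \<le> j" "j < k" "k \<le> length s" "t = block_transp i j k s"
    using assms unfolding transp_step_def by blast
  note sp = bt_split[OF h(1-4)]
  define P' where "P' = take (i-1) s"
  define B1 where "B1 = drop (i-1) (take j s)"
  define B2 where "B2 = drop j (take k s)"
  define R where "R = drop k s"
  have hs: "P' @ B1 @ B2 @ R = s" using sp(1)[symmetric] unfolding P'_def B1_def B2_def R_def .
  have t: "t = P' @ B2 @ B1 @ R"
    using h(5) unfolding block_transp_def P'_def B1_def B2_def R_def .
  have "length t = length (P' @ B1 @ B2 @ R)" unfolding t by simp
  then show "length t = n" using hs assms by simp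
  have "distinct (P' @ B1 @ B2 @ R)" using hs assms by simp
  then show "distinct t" unfolding t by auto
  have "set t = set (P' @ B1 @ B2 @ R)" unfolding t by auto
  then show "set t = {1..n}" using hs assms by simp
qed

lemma step_bound:
  fixes s t :: "nat list" and \<gamma> :: "nat \<Rightarrow> nat"
  assumes ls: "length s = n" and ds: "distinct s" and ss: "set s = {1..n}"
    and gp: "\<gamma> permutes {0..n}" and st: "transp_step s t"
    and Pcl: "\<And>X Y Z. finite X \<Longrightarrow> finite Y \<Longrightarrow> finite Z \<Longrightarrow> X \<inter> Y = {} \<Longrightarrow> Y \<inter> Z = {}
               \<Longrightarrow> X \<inter> Z = {} \<Longrightarrow> P X \<Longrightarrow> P Y \<Longrightarrow> P Z \<Longrightarrow> P (X \<union> Y \<union> Z)"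
  shows "\<bar>int (card {Cy \<in> orbit (cycle_of_list (rev [0..<n+1]) \<circ> cycle_of_list (0 # t) \<circ> \<gamma>) ` {0..n}. P Cy})
        - int (card {Cy \<in> orbit (cycle_of_list (rev [0..<n+1]) \<circ> cycle_of_list (0 # s) \<circ> \<gamma>) ` {0..n}. P Cy})\<bar> \<le> 2"
proof -
  obtain i j k where h: "1 \<le> i" "i \<le> j" "j < k" "k \<le> length s" "t = block_transp i j k s"
    using st unfolding transp_step_def by blast
  note sp = bt_split[OF h(1-4)]
  define Q where "Q = 0 # take (i-1) s"
  define B1 where "B1 = drop (i-1) (take j s)"
  define B2 where "B2 = drop j (take k s)"
  define R where "R = drop k s"
  have hs: "take (i-1) s @ B1 @ B2 @ R = s" using sp(1)[symmetric] unfolding B1_def B2_def R_def .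
  have L: "0 # s = Q @ B1 @ B2 @ R" unfolding Q_def using hs by simp
  have L': "0 # t = Q @ B2 @ B1 @ R" using h(5) unfolding block_transp_def Q_def B1_def B2_def R_def by simp
  have ne: "Q \<noteq> []" "B1 \<noteq> []" "B2 \<noteq> []" using sp(2,3) unfolding Q_def B1_def B2_def by simp_all
  have d0: "distinct (0 # s)" using ds ss by auto
  then have dL: "distinct (Q @ B1 @ B2 @ R)" using L by simp
  note bc = block_cyc[OF dL ne]
  define x where "x = last Q"
  define y where "y = last B1"
  define z where "z = last B2"
  have setL: "set (0 # s) = {0..n}" using ss by auto
  have xyz: "x \<in> {0..n}" "y \<in> {0..n}" "z \<in> {0..n}"
    using ne setL unfolding L x_def y_def z_def by auto
  define pt where "pt = cycle_of_list (rev [0..<n+1])"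
  define f where "f = pt \<circ> cycle_of_list (0 # s) \<circ> \<gamma>"
  define g where "g = pt \<circ> cycle_of_list (0 # t) \<circ> \<gamma>"
  have "set (rev [0..<n+1]) = {0..n}" by auto
  then have ptp: "pt permutes {0..n}" unfolding pt_def using cycle_permutes[of "rev [0..<n+1]"]
    by simp
  have c1: "cycle_of_list (0 # s) permutes {0..n}" using cycle_permutes[of "0 # s"] setL by simp
  have setL': "set (0 # t) = {0..n}" using step_inv[OF ls ds ss st] by auto
  have c2: "cycle_of_list (0 # t) permutes {0..n}" using cycle_permutes[of "0 # t"] setL' by simp
  have fp: "f permutes {0..n}" unfolding f_def
    by (rule permutes_compose[OF gp permutes_compose[OF c1 ptp]])
  have gp2: "g permutes {0..n}" unfolding g_def
    by (rule permutes_compose[OF gp permutes_compose[OF c2 ptp]])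
  define u where "u = inv \<gamma> x"
  define v where "v = inv \<gamma> y"
  define w where "w = inv \<gamma> z"
  have gi: "\<gamma> (inv \<gamma> a) = a" for a using permutes_inverses(1)[OF gp] .
  have ig: "inv \<gamma> (\<gamma> a) = a" for a using permutes_inverses(2)[OF gp] .
  have gu: "\<gamma> u = x" "\<gamma> v = y" "\<gamma> w = z" unfolding u_def v_def w_def using gi by simp_all
  have ip: "inv \<gamma> permutes {0..n}" by (rule permutes_inv[OF gp])
  have uvw: "{u,v,w} \<subseteq> {0..n}" unfolding u_def v_def w_def
    using xyz permutes_in_image[OF ip] by auto
  have agree: "\<forall>e. e \<notin> {u,v,w} \<longrightarrow> g e = f e"
  proof (intro allI impI)
    fix e assume e: "e \<notin> {u,v,w}"
    have "\<gamma> e \<notin> {x,y,z}"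
    proof
      assume "\<gamma> e \<in> {x,y,z}"
      then have "inv \<gamma> (\<gamma> e) \<in> {u,v,w}" unfolding u_def v_def w_def by auto
      then show False using e ig by simp
    qed
    then have "\<gamma> e \<notin> {last Q, last B1, last B2}" unfolding x_def y_def z_def .
    then have "cycle_of_list (0 # t) (\<gamma> e) = cycle_of_list (0 # s) (\<gamma> e)"
      using bc(1) L L' by simp
    then show "g e = f e" unfolding f_def g_def by simp
  qed
  have rot: "g u = f v" "g v = f w" "g w = f u"
    unfolding f_def g_def using gu bc(2-4) L L' x_def y_def z_def by simp_all
  have "\<bar>int (card {Cy \<in> orbit g ` {0..n}. P Cy}) - int (card {Cy \<in> orbit f ` {0..n}. P Cy})\<bar> \<le> 2"
    by (rule count_change[where P=P, OF _ fp gp2 uvw agree rot Pcl]) simp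
  then show ?thesis unfolding f_def g_def pt_def .
qed

definition statP :: "(nat set \<Rightarrow> bool) \<Rightarrow> nat \<Rightarrow> (nat \<Rightarrow> nat) \<Rightarrow> nat list \<Rightarrow> nat" where
  "statP P n \<gamma> x = card {Cy \<in> orbit (cycle_of_list (rev [0..<n+1]) \<circ> cycle_of_list (0 # x) \<circ> \<gamma>) ` {0..n}. P Cy}"

lemma chain:
  assumes gp: "\<gamma> permutes {0..n}"
    and Pcl: "\<And>X Y Z. finite X \<Longrightarrow> finite Y \<Longrightarrow> finite Z \<Longrightarrow> X \<inter> Y = {} \<Longrightarrow> Y \<inter> Z = {}
               \<Longrightarrow> X \<inter> Z = {} \<Longrightarrow> P X \<Longrightarrow> P Y \<Longrightarrow> P Z \<Longrightarrow> P (X \<union> Y \<union> Z)"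
  shows "(transp_step ^^ m) s t \<Longrightarrow> length s = n \<Longrightarrow> distinct s \<Longrightarrow> set s = {1..n} \<Longrightarrow>
    \<bar>int (statP P n \<gamma> t) - int (statP P n \<gamma> s)\<bar> \<le> 2 * int m"
proof (induction m arbitrary: s)
  case 0 then show ?case by simp
next
  case (Suc m)
  then obtain y where y: "transp_step s y" "(transp_step ^^ m) y t" using relpowp_Suc_D2 by metis
  note inv = step_inv[OF Suc.prems(2-4) y(1)]
  have 1: "\<bar>int (statP P n \<gamma> t) - int (statP P n \<gamma> y)\<bar> \<le> 2 * int m"
    using Suc.IH[OF y(2) inv] .
  have 2: "\<bar>int (statP P n \<gamma> y) - int (statP P n \<gamma> s)\<bar> \<le> 2"
    unfolding statP_def by (rule step_bound[where P=P, OF Suc.prems(2-4) gp y(1) Pcl])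
  show ?case using 1 2 unfolding of_nat_Suc abs_le_iff by auto
qed

lemma statP_id:
  "statP P n \<gamma> [1..<n+1] = card {Cy \<in> orbit \<gamma> ` {0..n}. P Cy}"
proof -
  have u: "[0..<n+1] = 0 # [1..<n+1]" using upt_conv_Cons[of 0 "n+1"] by simp
  have "cycle_of_list (rev [0..<n+1]) \<circ> cycle_of_list (0 # [1..<n+1]) = id"
    unfolding u[symmetric]
  proof
    fix e
    show "(cycle_of_list (rev [0..<n+1]) \<circ> cycle_of_list [0..<n+1]) e = id e"
      using cyc_rev_inv[OF distinct_upt[of 0 "n+1"], of e] by (simp only: comp_apply id_apply)
  qed
  then show ?thesis unfolding statP_def by simp
qed

lemma card3_union:
  assumes "finite X" "finite Y" "finite Z" "X \<inter> Y = {}" "Y \<inter> Z = {}" "X \<inter> Z = {}"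
  shows "card (X \<union> Y \<union> Z) = card X + card Y + card Z"
proof -
  have "card (X \<union> Y) = card X + card Y" using assms by (simp add: card_Un_disjoint)
  moreover have "card ((X \<union> Y) \<union> Z) = card (X \<union> Y) + card Z"
    using assms by (intro card_Un_disjoint) auto
  ultimately show ?thesis by simp
qed

lemma fin_arith:
  fixes x y z :: int and t :: nat
  assumes "\<bar>x\<bar> \<le> 2 * int t" "\<bar>y\<bar> \<le> 2 * int t" "\<bar>z\<bar> \<le> 2 * int t"
  shows "real (max (max (nat \<bar>x\<bar>) (nat \<bar>y\<bar>)) (nat \<bar>z\<bar>)) / 2 \<le> real t"
proof -
  have "nat \<bar>x\<bar> \<le> 2 * t" "nat \<bar>y\<bar> \<le> 2 * t" "nat \<bar>z\<bar> \<le> 2 * t"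
    using assms by linarith+
  then have "max (max (nat \<bar>x\<bar>) (nat \<bar>y\<bar>)) (nat \<bar>z\<bar>) \<le> 2 * t" by simp
  then have "real (max (max (nat \<bar>x\<bar>) (nat \<bar>y\<bar>)) (nat \<bar>z\<bar>)) \<le> real (2 * t)"
    by (rule of_nat_mono)
  then show ?thesis by simp
qed

theorem theorem1:
  fixes s :: "nat list" and n :: nat
  assumes "length s = n" and "distinct s" and "set s = {1..n}"
  shows "\<forall>\<gamma>. \<gamma> permutes {0..n} \<longrightarrow>
    real (td s) \<ge>
      real (max (max
        (nat \<bar>int (num_cycles (cycle_of_list (rev [0..<n+1]) \<circ> cycle_of_list (0 # s) \<circ> \<gamma>) {0..n})
              - int (num_cycles \<gamma> {0..n})\<bar>)
        (nat \<bar>int (num_odd_cycles (cycle_of_list (rev [0..<n+1]) \<circ> cycle_of_list (0 # s) \<circ> \<gamma>) {0..n})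
              - int (num_odd_cycles \<gamma> {0..n})\<bar>))
        (nat \<bar>int (num_even_cycles (cycle_of_list (rev [0..<n+1]) \<circ> cycle_of_list (0 # s) \<circ> \<gamma>) {0..n})
              - int (num_even_cycles \<gamma> {0..n})\<bar>)) / 2"
proof (intro allI impI)
  fix \<gamma> :: "nat \<Rightarrow> nat"
  assume gp: "\<gamma> permutes {0..n}"
  have "set s = {1..<n+1}" using assms(3) by auto
  then have "\<exists>m. (transp_step ^^ m) s [1..<n+1]" using reach[OF assms(2)] by blast
  then have tdp: "(transp_step ^^ td s) s [1..<n+1]"
    unfolding td_def using assms(1) by (metis (mono_tags, lifting) LeastI_ex)
  define \<Phi> where "\<Phi> = cycle_of_list (rev [0..<n+1]) \<circ> cycle_of_list (0 # s) \<circ> \<gamma>"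
  have gen: "\<bar>int (card {Cy \<in> orbit \<Phi> ` {0..n}. P Cy}) - int (card {Cy \<in> orbit \<gamma> ` {0..n}. P Cy})\<bar> \<le> 2 * int (td s)"
    if Pcl: "\<And>X Y Z. finite X \<Longrightarrow> finite Y \<Longrightarrow> finite Z \<Longrightarrow> X \<inter> Y = {} \<Longrightarrow> Y \<inter> Z = {}
               \<Longrightarrow> X \<inter> Z = {} \<Longrightarrow> P X \<Longrightarrow> P Y \<Longrightarrow> P Z \<Longrightarrow> P (X \<union> Y \<union> Z)" for P
  proof -
    have "\<bar>int (statP P n \<gamma> [1..<n+1]) - int (statP P n \<gamma> s)\<bar> \<le> 2 * int (td s)"
      by (rule chain[where P=P, OF gp Pcl tdp assms])
    then show ?thesis unfolding statP_id unfolding statP_def \<Phi>_def by linarith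
  qed
  have a: "\<bar>int (num_cycles \<Phi> {0..n}) - int (num_cycles \<gamma> {0..n})\<bar> \<le> 2 * int (td s)"
    using gen[of "\<lambda>_. True"] unfolding num_cycles_def perm_cycles_def by simp
  have b: "\<bar>int (num_odd_cycles \<Phi> {0..n}) - int (num_odd_cycles \<gamma> {0..n})\<bar> \<le> 2 * int (td s)"
    unfolding num_odd_cycles_def perm_cycles_def
    by (rule gen) (simp add: card3_union)
  have c: "\<bar>int (num_even_cycles \<Phi> {0..n}) - int (num_even_cycles \<gamma> {0..n})\<bar> \<le> 2 * int (td s)"
    unfolding num_even_cycles_def perm_cycles_def
    by (rule gen) (simp add: card3_union)
  have "real (max (max (nat \<bar>int (num_cycles \<Phi> {0..n}) - int (num_cycles \<gamma> {0..n})\<bar>)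
          (nat \<bar>int (num_odd_cycles \<Phi> {0..n}) - int (num_odd_cycles \<gamma> {0..n})\<bar>))
          (nat \<bar>int (num_even_cycles \<Phi> {0..n}) - int (num_even_cycles \<gamma> {0..n})\<bar>)) / 2 \<le> real (td s)"
    by (rule fin_arith[OF a b c])
  show "real (td s) \<ge>
      real (max (max
        (nat \<bar>int (num_cycles (cycle_of_list (rev [0..<n+1]) \<circ> cycle_of_list (0 # s) \<circ> \<gamma>) {0..n})
              - int (num_cycles \<gamma> {0..n})\<bar>)
        (nat \<bar>int (num_odd_cycles (cycle_of_list (rev [0..<n+1]) \<circ> cycle_of_list (0 # s) \<circ> \<gamma>) {0..n})
              - int (num_odd_cycles \<gamma> {0..n})\<bar>))
        (nat \<bar>int (num_even_cycles (cycle_of_list (rev [0..<n+1]) \<circ> cycle_of_list (0 # s) \<circ> \<gamma>) {0..n})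
              - int (num_even_cycles \<gamma> {0..n})\<bar>)) / 2"
    using \<open>real (max (max (nat \<bar>int (num_cycles \<Phi> {0..n}) - int (num_cycles \<gamma> {0..n})\<bar>)
          (nat \<bar>int (num_odd_cycles \<Phi> {0..n}) - int (num_odd_cycles \<gamma> {0..n})\<bar>))
          (nat \<bar>int (num_even_cycles \<Phi> {0..n}) - int (num_even_cycles \<gamma> {0..n})\<bar>)) / 2 \<le> real (td s)\<close>
    unfolding \<Phi>_def .
qed

end
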